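(* Let a shallow network be given, let $X$ and $Y$ be $\mathbb{R}^{V_0}$- and $\mathbb{R}^{V_2}$-valued random variables, and let $\ell:\mathbb{R}^{V_2}\times\mathbb{R}^{V_2}\to[0,\infty)$ be a $C^1$ function such that $J(\theta)=\mathbb{E}[\ell(\Psi_\theta(X),Y)]$ is $C^1$ on $\Theta$ and differentiation and integration can be interchanged. Let $\theta=(w,\beta)$ exhibit a bias or duplication redundancy, let $\lambda=(\lambda_\emptyset,(\lambda_j)_{j\in V_1})\neq0$ satisfy $\lambda_\emptyset+\sum_{j\in V_1}\lambda_j\psi(\beta_j+\sum_{i\in V_0}x_iw_{ij})=0$ for all $x\in\mathcal{X}$, and define $\theta(t)=(w(t),\beta(t))$, $t\in\mathbb{R}$, by $w_{ij}(t)=w_{ij}$, $\beta_j(t)=\beta_j$ for $i\in V_0,j\in V_1$, and $w_{jk}(t)=w_{jk}+t\lambda_j$, $\beta_k(t)=\beta_k+t\lambda_\emptyset$ for $j\in V_1,k\in V_2$. Then either $\theta(t)$ is a critical point of $J$ for all $t\in\mathbb{R}$, or there is at most one $t\in\mathbb{R}$ for which $\theta(t)$ is a critical point of $J$. If moreover $\#V_2=1$ and $\theta$ has no deactivation redundancy, then $\theta$ being a critical point of $J$ implies that $\theta(t)$ is a critical point of $J$ for all $t\in\mathbb{R}$.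
   Context: Shallow network: finite pairwise disjoint sets $V_0,V_1,V_2$ and activation $\psi$ (differentiable); $E=(V_0\times V_1)\cup(V_1\times V_2)$; $\Theta=\mathbb{R}^E\times\mathbb{R}^{V_1\cup V_2}$, $\theta=(w,\beta)$; response $(\Psi_\theta(x))_l=\beta_l+\sum_{j\in V_1}\psi(\beta_j+\sum_{i\in V_0}x_iw_{ij})w_{jl}$; $w_{j\bullet}=(w_{jl})_{l\in V_2}$, $w_{\bullet j}=(w_{ij})_{i\in V_0}$; $\mathcal{X}$ is the support of the distribution of $X$. Redundancy types: $\theta$ has a deactivation redundancy if $w_{k\bullet}=0$ for some $k\in V_1$; a bias redundancy if for some $k\in V_1$ the function $x\mapsto\psi(\beta_k+\sum_ix_iw_{ik})$ is constant on $\mathcal{X}$; a duplication redundancy if $(w_{\bullet j},\beta_j)=(w_{\bullet k},\beta_k)$ for some $j\neq k\in V_1$. *)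

theory Defs
  imports "HOL-Probability.Probability"
begin

text \<open>Shallow network with input layer V0 = UNIV::'i, hidden layer V1 = UNIV::'h,
 output layer V2 = UNIV::'o (finite types, automatically pairwise disjoint).
 A parameter theta = (w, beta) with w = (w1, w2), w1 $ i $ j = w_ij (i in V0, j in V1),
 w2 $ j $ l = w_jl (j in V1, l in V2), beta = (b1, b2), b1 $ j = beta_j, b2 $ l = beta_l.\<close>

type_synonym ('i, 'h, 'o) param =
  "((real^'h^'i) \<times> (real^'o^'h)) \<times> ((real^'h) \<times> (real^'o))"

definition Psi :: "(real \<Rightarrow> real) \<Rightarrow> ('i::finite, 'h::finite, 'o::finite) param \<Rightarrow> real^'i \<Rightarrow> real^'o" where
  "Psi \<psi> \<theta> x = (\<chi> l. (snd (snd \<theta>)) $ l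
       + (\<Sum>j\<in>UNIV. \<psi> ((fst (snd \<theta>)) $ j + (\<Sum>i\<in>UNIV. x $ i * (fst (fst \<theta>)) $ i $ j))
                     * (snd (fst \<theta>)) $ j $ l))"

definition support_of :: "'a::topological_space measure \<Rightarrow> 'a set" where
  "support_of \<mu> = {x. \<forall>U. open U \<and> x \<in> U \<longrightarrow> emeasure \<mu> U > 0}"

definition deactivation_redundancy :: "('i::finite, 'h::finite, 'o::finite) param \<Rightarrow> bool" where
  "deactivation_redundancy \<theta> \<longleftrightarrow> (\<exists>k. (snd (fst \<theta>)) $ k = 0)"

definition bias_redundancy :: "(real \<Rightarrow> real) \<Rightarrow> (real^'i) set \<Rightarrow> ('i::finite, 'h::finite, 'o::finite) param \<Rightarrow> bool" where
  "bias_redundancy \<psi> \<X> \<theta> \<longleftrightarrow> (\<exists>k. \<exists>c. \<forall>x\<in>\<X>.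
      \<psi> ((fst (snd \<theta>)) $ k + (\<Sum>i\<in>UNIV. x $ i * (fst (fst \<theta>)) $ i $ k)) = c)"

definition duplication_redundancy :: "('i::finite, 'h::finite, 'o::finite) param \<Rightarrow> bool" where
  "duplication_redundancy \<theta> \<longleftrightarrow> (\<exists>j k. j \<noteq> k \<and>
      (\<chi> i. (fst (fst \<theta>)) $ i $ j) = (\<chi> i. (fst (fst \<theta>)) $ i $ k) \<and>
      (fst (snd \<theta>)) $ j = (fst (snd \<theta>)) $ k)"

definition C1_UNIV :: "('a::real_normed_vector \<Rightarrow> 'b::real_normed_vector) \<Rightarrow> bool" where
  "C1_UNIV f \<longleftrightarrow> (\<exists>D. (\<forall>z. (f has_derivative blinfun_apply (D z)) (at z)) \<and> continuous_on UNIV D)"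

definition critical_point :: "('a::real_normed_vector \<Rightarrow> real) \<Rightarrow> 'a \<Rightarrow> bool" where
  "critical_point J \<theta> \<longleftrightarrow> (J has_derivative (\<lambda>_. 0)) (at \<theta>)"

definition theta_path :: "('i::finite, 'h::finite, 'o::finite) param \<Rightarrow> real \<Rightarrow> real^'h \<Rightarrow> real
     \<Rightarrow> ('i, 'h, 'o) param" where
  "theta_path \<theta> lam0 lam t =
     ((fst (fst \<theta>), (\<chi> j k. (snd (fst \<theta>)) $ j $ k + t * lam $ j)),
      (fst (snd \<theta>), (\<chi> k. (snd (snd \<theta>)) $ k + t * lam0)))"

end

theory Submission
  imports Defs
begin

definition pre :: "real^'i \<Rightarrow> ('i::finite,'h::finite,'o::finite) param \<Rightarrow> 'h \<Rightarrow> real" where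
 "pre x \<eta> j = fst (snd \<eta>) $ j + (\<Sum>i\<in>UNIV. x $ i * fst (fst \<eta>) $ i $ j)"

lemma Psi_alt: "Psi \<psi> \<eta> x = snd (snd \<eta>) + (\<Sum>j\<in>UNIV. \<psi> (pre x \<eta> j) *\<^sub>R snd (fst \<eta>) $ j)"
  by (simp add: Psi_def pre_def vec_eq_iff mult.commute)

lemma pre_deriv: "((\<lambda>\<eta>. pre x \<eta> j) has_derivative (\<lambda>h. pre x h j)) (at \<eta>0)"
  by (rule linear_imp_has_derivative, rule linearI)
     (auto simp: pre_def algebra_simps sum.distrib sum_distrib_left)

definition DPsi :: "(real \<Rightarrow> real) \<Rightarrow> (real \<Rightarrow> real) \<Rightarrow> ('i::finite,'h::finite,'o::finite) param \<Rightarrow> real^'i \<Rightarrow> ('i,'h,'o) param \<Rightarrow> real^'o" where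
 "DPsi \<psi> \<psi>' \<eta>0 x h = snd (snd h) + (\<Sum>j\<in>UNIV. (\<psi>' (pre x \<eta>0 j) * pre x h j) *\<^sub>R snd (fst \<eta>0) $ j
     + \<psi> (pre x \<eta>0 j) *\<^sub>R snd (fst h) $ j)"

lemma Psi_deriv:
  assumes "\<And>z. (\<psi> has_real_derivative \<psi>' z) (at z)"
  shows "((\<lambda>\<eta>. Psi \<psi> \<eta> x) has_derivative DPsi \<psi> \<psi>' \<eta>0 x) (at \<eta>0)"
proof -
  have d1: "((\<lambda>\<eta>. \<psi> (pre x \<eta> j)) has_derivative (\<lambda>h. pre x h j * \<psi>' (pre x \<eta>0 j))) (at \<eta>0)" for j
    by (rule DERIV_compose_FDERIV[OF assms pre_deriv])
  have d2: "((\<lambda>\<eta>. snd (fst \<eta>) $ j) has_derivative (\<lambda>h. snd (fst h) $ j)) (at \<eta>0)" for j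
    by (rule linear_imp_has_derivative, rule linearI) auto
  show ?thesis
    unfolding Psi_alt[abs_def]
    apply (rule has_derivative_eq_rhs)
     apply (rule has_derivative_add)
      apply (rule has_derivative_snd, rule has_derivative_snd, rule has_derivative_ident)
     apply (rule has_derivative_sum)
     apply (rule has_derivative_scaleR[OF d1 d2])
    apply (simp add: DPsi_def fun_eq_iff algebra_simps)
    done
qed

lemma AE_support:
  fixes X :: "'a \<Rightarrow> 'b::second_countable_topology"
  assumes X: "X \<in> borel_measurable M"
  shows "AE \<omega> in M. X \<omega> \<in> support_of (distr M borel X)"
proof -
  define \<mu> where "\<mu> = distr M borel X"
  define F where "F = {U. open U \<and> emeasure \<mu> U = 0}"
  obtain F' where F': "F' \<subseteq> F" "countable F'" "\<Union>F' = \<Union>F"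
    using Lindelof[of F] unfolding F_def by blast
  have "(\<Union>U\<in>F'. U) \<in> null_sets \<mu>"
  proof (rule null_sets_UN')
    show "countable F'" by fact
    fix U assume "U \<in> F'"
    then have "open U" "emeasure \<mu> U = 0" using F' unfolding F_def by auto
    then show "U \<in> null_sets \<mu>" unfolding \<mu>_def by (auto simp: null_sets_def)
  qed
  then have "AE x in \<mu>. x \<in> support_of \<mu>"
  proof (rule AE_I')
    show "{x \<in> space \<mu>. x \<notin> support_of \<mu>} \<subseteq> (\<Union>U\<in>F'. U)"
    proof
      fix x assume "x \<in> {x \<in> space \<mu>. x \<notin> support_of \<mu>}"
      then obtain U where "open U" "x \<in> U" "emeasure \<mu> U = 0"
        unfolding support_of_def by (auto simp: not_less)
      then have "x \<in> \<Union>F" unfolding F_def by auto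
      then show "x \<in> (\<Union>U\<in>F'. U)" using F' by auto
    qed
  qed
  then show ?thesis unfolding \<mu>_def using AE_distrD[OF X] by blast
qed

lemma J'_formula:
  assumes psi': "\<And>z. (\<psi> has_real_derivative \<psi>' z) (at z)"
    and lossD: "\<And>z. (loss has_derivative blinfun_apply (D z)) (at z)"
    and ig: "((\<lambda>\<eta>'. loss (Psi \<psi> \<eta>' x, y)) has_derivative J'') (at \<eta>)"
  shows "J'' h = D (Psi \<psi> \<eta> x, y) (DPsi \<psi> \<psi>' \<eta> x h, 0)"
proof -
  have "((\<lambda>\<eta>'. (Psi \<psi> \<eta>' x, y)) has_derivative (\<lambda>h. (DPsi \<psi> \<psi>' \<eta> x h, 0))) (at \<eta>)"
    by (rule has_derivative_Pair[OF Psi_deriv[OF psi'] has_derivative_const])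
  from has_derivative_compose[OF this lossD]
  have "((\<lambda>\<eta>'. loss (Psi \<psi> \<eta>' x, y)) has_derivative (\<lambda>h. D (Psi \<psi> \<eta> x, y) (DPsi \<psi> \<psi>' \<eta> x h, 0))) (at \<eta>)"
    by (simp add: o_def)
  from has_derivative_unique[OF ig this] show ?thesis by meson
qed

lemma pre_path: "pre x (theta_path \<theta> lam0 lam t) j = pre x \<theta> j"
  by (simp add: pre_def theta_path_def)

lemma path0: "theta_path \<theta> lam0 lam 0 = \<theta>"
  by (simp add: theta_path_def)

lemma Psi_path: "Psi \<psi> (theta_path \<theta> lam0 lam t) x = Psi \<psi> \<theta> x
   + (t * (lam0 + (\<Sum>j\<in>UNIV. lam $ j * \<psi> (pre x \<theta> j)))) *\<^sub>R (\<chi> k. 1)"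
  by (simp add: Psi_def theta_path_def vec_eq_iff pre_def[symmetric] algebra_simps sum.distrib sum_distrib_left)

lemma DPsi_path: "DPsi \<psi> \<psi>' (theta_path \<theta> lam0 lam t) x h = DPsi \<psi> \<psi>' \<theta> x h
   + (t * (\<Sum>j\<in>UNIV. lam $ j * (\<psi>' (pre x \<theta> j) * pre x h j))) *\<^sub>R (\<chi> k. 1)"
  by (simp add: DPsi_def pre_path vec_eq_iff algebra_simps sum.distrib sum_distrib_left)
     (simp add: theta_path_def algebra_simps sum.distrib)

theorem theorem4p2:
  fixes \<psi> :: "real \<Rightarrow> real"
    and M :: "'a measure"
    and X :: "'a \<Rightarrow> real^'i::finite"
    and Y :: "'a \<Rightarrow> real^'o::finite"
    and loss :: "(real^'o) \<times> (real^'o) \<Rightarrow> real"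
    and J :: "('i, 'h::finite, 'o) param \<Rightarrow> real"
    and J' :: "('i, 'h, 'o) param \<Rightarrow> 'a \<Rightarrow> ('i, 'h, 'o) param \<Rightarrow> real"
    and \<theta> :: "('i, 'h, 'o) param"
    and lam0 :: real and lam :: "real^'h"
  assumes psi_diff: "\<And>z. \<psi> differentiable (at z)"
    and prob: "prob_space M"
    and X_meas: "X \<in> borel_measurable M"
    and Y_meas: "Y \<in> borel_measurable M"
    and loss_nonneg: "\<And>z. loss z \<ge> 0"
    and loss_C1: "C1_UNIV loss"
    and J_def: "\<And>\<eta>. J \<eta> = (\<integral>\<omega>. loss (Psi \<psi> \<eta> (X \<omega>), Y \<omega>) \<partial>M)"
    and J_integrable: "\<And>\<eta> :: ('i, 'h, 'o) param. integrable M (\<lambda>\<omega>. loss (Psi \<psi> \<eta> (X \<omega>), Y \<omega>))"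
    and J_C1: "C1_UNIV J"
    and integrand_deriv: "\<And>\<eta> \<omega>. ((\<lambda>\<eta>'. loss (Psi \<psi> \<eta>' (X \<omega>), Y \<omega>)) has_derivative J' \<eta> \<omega>) (at \<eta>)"
    and deriv_integrable: "\<And>\<eta> h. integrable M (\<lambda>\<omega>. J' \<eta> \<omega> h)"
    and interchange: "\<And>\<eta>. (J has_derivative (\<lambda>h. \<integral>\<omega>. J' \<eta> \<omega> h \<partial>M)) (at \<eta>)"
    and redundancy: "bias_redundancy \<psi> (support_of (distr M borel X)) \<theta> \<or> duplication_redundancy \<theta>"
    and lam_nonzero: "lam0 \<noteq> 0 \<or> lam \<noteq> 0"
    and lam_vanish: "\<And>x. x \<in> support_of (distr M borel X) \<Longrightarrow>
        lam0 + (\<Sum>j\<in>UNIV. lam $ j * \<psi> ((fst (snd \<theta>)) $ j + (\<Sum>i\<in>UNIV. x $ i * (fst (fst \<theta>)) $ i $ j))) = 0"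
  shows "((\<forall>t. critical_point J (theta_path \<theta> lam0 lam t)) \<or>
          (\<forall>t1 t2. critical_point J (theta_path \<theta> lam0 lam t1) \<and> critical_point J (theta_path \<theta> lam0 lam t2)
                   \<longrightarrow> t1 = t2))
       \<and> (CARD('o) = 1 \<and> \<not> deactivation_redundancy \<theta> \<and> critical_point J \<theta>
            \<longrightarrow> (\<forall>t. critical_point J (theta_path \<theta> lam0 lam t)))"
proof -
  obtain D where lossD: "\<And>z. (loss has_derivative blinfun_apply (D z)) (at z)"
    using loss_C1 unfolding C1_UNIV_def by blast
  define \<psi>' where "\<psi>' = deriv \<psi>"
  have psi': "\<And>z. (\<psi> has_real_derivative \<psi>' z) (at z)"
    unfolding \<psi>'_def using psi_diff DERIV_deriv_iff_real_differentiable by blast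
  define S where "S = support_of (distr M borel X)"
  have AE_S: "AE \<omega> in M. X \<omega> \<in> S" unfolding S_def by (rule AE_support[OF X_meas])
  define Dc where "Dc x h = (\<Sum>j\<in>UNIV. lam $ j * (\<psi>' (pre x \<theta> j) * pre x h j))"
    for x :: "real^'i" and h :: "('i,'h,'o) param"
  define one :: "real^'o" where "one = (\<chi> k. 1)"
  have cc0: "lam0 + (\<Sum>j\<in>UNIV. lam $ j * \<psi> (pre x \<theta> j)) = 0" if "x \<in> S" for x
    using lam_vanish[of x] that unfolding S_def pre_def by simp
  have Jf: "J' \<eta> \<omega> h = D (Psi \<psi> \<eta> (X \<omega>), Y \<omega>) (DPsi \<psi> \<psi>' \<eta> (X \<omega>) h, 0)" for \<eta> \<omega> h
    by (rule J'_formula[OF psi' lossD integrand_deriv])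
  have lin: "J' (theta_path \<theta> lam0 lam t) \<omega> h
      = J' \<theta> \<omega> h + t * D (Psi \<psi> \<theta> (X \<omega>), Y \<omega>) (Dc (X \<omega>) h *\<^sub>R one, 0)"
    if "X \<omega> \<in> S" for \<omega> t h
  proof -
    have e: "(DPsi \<psi> \<psi>' \<theta> (X \<omega>) h + (t * Dc (X \<omega>) h) *\<^sub>R one, 0::real^'o)
        = (DPsi \<psi> \<psi>' \<theta> (X \<omega>) h, 0) + t *\<^sub>R (Dc (X \<omega>) h *\<^sub>R one, 0)" by simp
    have p: "Psi \<psi> (theta_path \<theta> lam0 lam t) (X \<omega>) = Psi \<psi> \<theta> (X \<omega>)"
      unfolding Psi_path cc0[OF that] by simp
    have d: "DPsi \<psi> \<psi>' (theta_path \<theta> lam0 lam t) (X \<omega>) h = DPsi \<psi> \<psi>' \<theta> (X \<omega>) h + (t * Dc (X \<omega>) h) *\<^sub>R one"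
      unfolding DPsi_path Dc_def one_def ..
    show ?thesis
      unfolding Jf[of "theta_path \<theta> lam0 lam t"] Jf[of \<theta>] p d e
      by (simp only: blinfun.add_right blinfun.scaleR_right) simp
  qed
  have lin2: "J' (theta_path \<theta> lam0 lam t) \<omega> h
      = J' \<theta> \<omega> h + t * (J' (theta_path \<theta> lam0 lam 1) \<omega> h - J' \<theta> \<omega> h)"
    if "X \<omega> \<in> S" for \<omega> t h
    using lin[OF that, of t h] lin[OF that, of 1 h] by simp
  have Ilin: "(\<integral>\<omega>. J' (theta_path \<theta> lam0 lam t) \<omega> h \<partial>M)
      = (\<integral>\<omega>. J' \<theta> \<omega> h \<partial>M) + t * ((\<integral>\<omega>. J' (theta_path \<theta> lam0 lam 1) \<omega> h \<partial>M) - (\<integral>\<omega>. J' \<theta> \<omega> h \<partial>M))"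
    for t h
  proof -
    have i1: "integrable M (\<lambda>\<omega>. J' \<theta> \<omega> h)" by (rule deriv_integrable)
    have i2: "integrable M (\<lambda>\<omega>. t * (J' (theta_path \<theta> lam0 lam 1) \<omega> h - J' \<theta> \<omega> h))"
      using Bochner_Integration.integrable_diff[OF deriv_integrable deriv_integrable] by (rule integrable_mult_right)
    have "(\<integral>\<omega>. J' (theta_path \<theta> lam0 lam t) \<omega> h \<partial>M)
       = (\<integral>\<omega>. J' \<theta> \<omega> h + t * (J' (theta_path \<theta> lam0 lam 1) \<omega> h - J' \<theta> \<omega> h) \<partial>M)"
    proof (rule integral_cong_AE)
      show "(\<lambda>\<omega>. J' (theta_path \<theta> lam0 lam t) \<omega> h) \<in> borel_measurable M"
        using deriv_integrable by blast
      show "(\<lambda>\<omega>. J' \<theta> \<omega> h + t * (J' (theta_path \<theta> lam0 lam 1) \<omega> h - J' \<theta> \<omega> h)) \<in> borel_measurable M"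
        using Bochner_Integration.integrable_add[OF i1 i2] by blast
      show "AE \<omega> in M. J' (theta_path \<theta> lam0 lam t) \<omega> h = J' \<theta> \<omega> h + t * (J' (theta_path \<theta> lam0 lam 1) \<omega> h - J' \<theta> \<omega> h)"
        using AE_S by eventually_elim (rule lin2)
    qed
    also have "\<dots> = (\<integral>\<omega>. J' \<theta> \<omega> h \<partial>M) + t * ((\<integral>\<omega>. J' (theta_path \<theta> lam0 lam 1) \<omega> h \<partial>M) - (\<integral>\<omega>. J' \<theta> \<omega> h \<partial>M))"
      by (simp add: Bochner_Integration.integral_add[OF i1 i2] integral_diff deriv_integrable)
    finally show ?thesis .
  qed
  have crit: "critical_point J \<eta> \<longleftrightarrow> (\<forall>h. (\<integral>\<omega>. J' \<eta> \<omega> h \<partial>M) = 0)" for \<eta>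
  proof
    assume "critical_point J \<eta>"
    then have "(\<lambda>h. \<integral>\<omega>. J' \<eta> \<omega> h \<partial>M) = (\<lambda>_. 0)"
      unfolding critical_point_def using has_derivative_unique[OF interchange] by blast
    then show "\<forall>h. (\<integral>\<omega>. J' \<eta> \<omega> h \<partial>M) = 0" by metis
  next
    assume "\<forall>h. (\<integral>\<omega>. J' \<eta> \<omega> h \<partial>M) = 0"
    then have "(\<lambda>h. \<integral>\<omega>. J' \<eta> \<omega> h \<partial>M) = (\<lambda>_. 0)" by auto
    then show "critical_point J \<eta>" unfolding critical_point_def using interchange[of \<eta>] by simp
  qed
  define a where "a h = (\<integral>\<omega>. J' \<theta> \<omega> h \<partial>M)" for h
  define b where "b h = (\<integral>\<omega>. J' (theta_path \<theta> lam0 lam 1) \<omega> h \<partial>M) - a h" for h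
  have critT: "critical_point J (theta_path \<theta> lam0 lam t) \<longleftrightarrow> (\<forall>h. a h + t * b h = 0)" for t
    unfolding crit a_def b_def using Ilin[of t] by presburger
  have part1: "(\<forall>t. critical_point J (theta_path \<theta> lam0 lam t)) \<or>
          (\<forall>t1 t2. critical_point J (theta_path \<theta> lam0 lam t1) \<and> critical_point J (theta_path \<theta> lam0 lam t2)
                   \<longrightarrow> t1 = t2)"
  proof (cases "\<forall>h. b h = 0")
    case True
    then show ?thesis unfolding critT by auto
  next
    case False
    then obtain h where hb: "b h \<noteq> 0" by blast
    show ?thesis
    proof (rule disjI2, intro allI impI)
      fix t1 t2
      assume "critical_point J (theta_path \<theta> lam0 lam t1) \<and> critical_point J (theta_path \<theta> lam0 lam t2)"
      then have "a h + t1 * b h = 0" "a h + t2 * b h = 0" unfolding critT by blast+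
      then have "t1 * b h = t2 * b h" by linarith
      then have "(t1 - t2) * b h = 0" by (simp add: left_diff_distrib)
      then show "t1 = t2" using hb by simp
    qed
  qed
  have part2: "\<forall>t. critical_point J (theta_path \<theta> lam0 lam t)"
    if card1: "CARD('o) = 1" and nd: "\<not> deactivation_redundancy \<theta>" and c\<theta>: "critical_point J \<theta>"
  proof -
    have a0: "a h = 0" for h using c\<theta> unfolding crit a_def by blast
    obtain o0 :: 'o where U: "UNIV = {o0}" using card1 card_1_singletonE by blast
    define w2 where "w2 j = snd (fst \<theta>) $ j $ o0" for j
    have row: "snd (fst \<theta>) $ j = w2 j *\<^sub>R one" for j
      unfolding w2_def one_def vec_eq_iff using U by auto
    have w2nz: "w2 j \<noteq> 0" for j
    proof
      assume "w2 j = 0"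
      then have "snd (fst \<theta>) $ j = 0" using row[of j] by simp
      then show False using nd unfolding deactivation_redundancy_def by blast
    qed
    have "b h = 0" for h
    proof -
      define h' :: "('i,'h,'o) param" where "h' = ((\<chi> i j. fst (fst h) $ i $ j * lam $ j / w2 j, 0),
          (\<chi> j. fst (snd h) $ j * lam $ j / w2 j, 0))"
      have preh': "pre x h' j = lam $ j / w2 j * pre x h j" for x j
        by (simp add: h'_def pre_def sum_distrib_left algebra_simps)
      have Dh': "DPsi \<psi> \<psi>' \<theta> x h' = Dc x h *\<^sub>R one" for x
      proof -
        have "DPsi \<psi> \<psi>' \<theta> x h' = (\<Sum>j\<in>UNIV. (\<psi>' (pre x \<theta> j) * (lam $ j / w2 j * pre x h j) * w2 j) *\<^sub>R one)"
          unfolding DPsi_def preh' by (simp add: h'_def row)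
        also have "\<dots> = (\<Sum>j\<in>UNIV. (lam $ j * (\<psi>' (pre x \<theta> j) * pre x h j)) *\<^sub>R one)"
          using w2nz by (intro sum.cong refl) (simp add: field_simps)
        also have "\<dots> = Dc x h *\<^sub>R one" by (simp add: Dc_def scaleR_sum_left)
        finally show ?thesis .
      qed
      have eqw: "J' (theta_path \<theta> lam0 lam 1) \<omega> h - J' \<theta> \<omega> h = J' \<theta> \<omega> h'" if "X \<omega> \<in> S" for \<omega>
        using lin[OF that, of 1 h] by (simp add: Jf[of \<theta> \<omega> h'] Dh')
      have "b h = (\<integral>\<omega>. J' (theta_path \<theta> lam0 lam 1) \<omega> h - J' \<theta> \<omega> h \<partial>M)"
        unfolding b_def a_def by (simp add: integral_diff deriv_integrable)
      also have "\<dots> = (\<integral>\<omega>. J' \<theta> \<omega> h' \<partial>M)"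
      proof (rule integral_cong_AE)
        show "(\<lambda>\<omega>. J' (theta_path \<theta> lam0 lam 1) \<omega> h - J' \<theta> \<omega> h) \<in> borel_measurable M"
          using Bochner_Integration.integrable_diff[OF deriv_integrable deriv_integrable] by blast
        show "(\<lambda>\<omega>. J' \<theta> \<omega> h') \<in> borel_measurable M" using deriv_integrable by blast
        show "AE \<omega> in M. J' (theta_path \<theta> lam0 lam 1) \<omega> h - J' \<theta> \<omega> h = J' \<theta> \<omega> h'"
          using AE_S by eventually_elim (rule eqw)
      qed
      also have "\<dots> = 0" using a0[of h'] unfolding a_def .
      finally show ?thesis .
    qed
    then show ?thesis unfolding critT using a0 by simp
  qed
  show ?thesis using part1 part2 by blast
qed

end
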